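(* Let $G$ be a group and let $\varphi,\psi\in\mathrm{Aut}(G)$ with $\varphi\psi=\psi\varphi$. On $G$ define $a*b=\varphi(ab^{-1})b$ and $a\circ b=\psi(ab^{-1})b$. Then for all integers $k,l$, the groupoid $(G,*^k\circ^l)$, with operation $a\,( *^k\circ^l)\,b=(a*^k b)\circ^l b$, is a quandle.
   Context: A quandle is a set with binary operation $*$ satisfying $x*x=x$, unique right division, and $(x*y)*z=(x*z)*(y*z)$; both operations above are quandle operations (generalised Alexander quandles). Powers: $a*^0b=a$; for $n\ge1$, $a*^nb=(a*^{n-1}b)*b$ and $a*^{-n}b$ is obtained by applying $n$ times the right inverse operation $\bar*$ (defined by $a=c*b\iff c=a\,\bar*\,b$); similarly for $\circ$. *)

theory Defs
  imports "HOL-Algebra.Algebra"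
begin

definition quandle :: "'a set \<Rightarrow> ('a \<Rightarrow> 'a \<Rightarrow> 'a) \<Rightarrow> bool" where
  "quandle S op \<longleftrightarrow>
     (\<forall>a\<in>S. \<forall>b\<in>S. op a b \<in> S) \<and>
     (\<forall>a\<in>S. op a a = a) \<and>
     (\<forall>b\<in>S. \<forall>c\<in>S. \<exists>!a. a \<in> S \<and> op a b = c) \<and>
     (\<forall>x\<in>S. \<forall>y\<in>S. \<forall>z\<in>S. op (op x y) z = op (op x z) (op y z))"

definition rdiv :: "'a set \<Rightarrow> ('a \<Rightarrow> 'a \<Rightarrow> 'a) \<Rightarrow> 'a \<Rightarrow> 'a \<Rightarrow> 'a" where
  "rdiv S op c b = (THE a. a \<in> S \<and> op a b = c)"

definition opow :: "'a set \<Rightarrow> ('a \<Rightarrow> 'a \<Rightarrow> 'a) \<Rightarrow> int \<Rightarrow> 'a \<Rightarrow> 'a \<Rightarrow> 'a" where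
  "opow S op n a b =
     (if 0 \<le> n then ((\<lambda>x. op x b) ^^ nat n) a
      else ((\<lambda>x. rdiv S op x b) ^^ nat (- n)) a)"

definition galex_op :: "('g, 'm) monoid_scheme \<Rightarrow> ('g \<Rightarrow> 'g) \<Rightarrow> 'g \<Rightarrow> 'g \<Rightarrow> 'g" where
  "galex_op G f a b = f (a \<otimes>\<^bsub>G\<^esub> inv\<^bsub>G\<^esub> b) \<otimes>\<^bsub>G\<^esub> b"

end

theory Submission
  imports Defs
begin

context group
begin

lemma zinvz: "z \<in> carrier G \<Longrightarrow> w \<in> carrier G \<Longrightarrow> z \<otimes> (inv z \<otimes> w) = w"
  by (simp add: m_assoc[symmetric])

lemma invzz: "z \<in> carrier G \<Longrightarrow> w \<in> carrier G \<Longrightarrow> inv z \<otimes> (z \<otimes> w) = w"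
  by (simp add: m_assoc[symmetric])

lemma iso_pow: "h \<in> iso G G \<Longrightarrow> (h ^^ n) \<in> iso G G"
  by (induction n) (auto intro: iso_set_trans simp: id_iso)

lemma iso_car: "h \<in> iso G G \<Longrightarrow> x \<in> carrier G \<Longrightarrow> h x \<in> carrier G"
  by (auto simp: iso_def hom_def)

lemma iso_mult: "h \<in> iso G G \<Longrightarrow> x \<in> carrier G \<Longrightarrow> y \<in> carrier G \<Longrightarrow> h (x \<otimes> y) = h x \<otimes> h y"
  by (auto simp: iso_def hom_def)

lemma iso_one: "h \<in> iso G G \<Longrightarrow> h \<one> = \<one>"
proof -
  assume "h \<in> iso G G"
  then have "group_hom G G h" by (simp add: group_hom_def group_hom_axioms_def iso_def is_group)
  then show ?thesis by (rule group_hom.hom_one)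
qed

lemma iso_inv: "h \<in> iso G G \<Longrightarrow> x \<in> carrier G \<Longrightarrow> h (inv x) = inv (h x)"
proof -
  assume "h \<in> iso G G" "x \<in> carrier G"
  then have "group_hom G G h" by (simp add: group_hom_def group_hom_axioms_def iso_def is_group)
  then show ?thesis by (rule group_hom.hom_inv[OF _ \<open>x \<in> carrier G\<close>])
qed

lemma galex_car: "h \<in> iso G G \<Longrightarrow> a \<in> carrier G \<Longrightarrow> b \<in> carrier G \<Longrightarrow> galex_op G h a b \<in> carrier G"
  by (simp add: galex_op_def iso_car)

lemma galex_comp: "h \<in> iso G G \<Longrightarrow> g \<in> iso G G \<Longrightarrow> a \<in> carrier G \<Longrightarrow> b \<in> carrier G \<Longrightarrow>
   galex_op G h (galex_op G g a b) b = galex_op G (h \<circ> g) a b"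
  by (simp add: galex_op_def iso_car m_assoc)

lemma galex_inv: "h \<in> iso G G \<Longrightarrow> b \<in> carrier G \<Longrightarrow> c \<in> carrier G \<Longrightarrow>
   galex_op G h (galex_op G (inv_into (carrier G) h) c b) b = c"
proof -
  assume h: "h \<in> iso G G" and b: "b \<in> carrier G" and c: "c \<in> carrier G"
  have bij: "bij_betw h (carrier G) (carrier G)" using h by (simp add: iso_def)
  have "h (inv_into (carrier G) h (c \<otimes> inv b)) = c \<otimes> inv b"
    using bij b c by (simp add: bij_betw_inv_into_right)
  moreover have "inv_into (carrier G) h (c \<otimes> inv b) \<in> carrier G"
    using iso_car[OF iso_set_sym[OF h]] b c by simp
  ultimately show ?thesis using b c by (simp add: galex_op_def m_assoc)
qed

lemma galex_uniq: "h \<in> iso G G \<Longrightarrow> a \<in> carrier G \<Longrightarrow> a' \<in> carrier G \<Longrightarrow> b \<in> carrier G \<Longrightarrow>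
   galex_op G h a b = galex_op G h a' b \<Longrightarrow> a = a'"
proof -
  assume h: "h \<in> iso G G" and a: "a \<in> carrier G" and a': "a' \<in> carrier G" and b: "b \<in> carrier G"
    and e: "galex_op G h a b = galex_op G h a' b"
  have inj: "inj_on h (carrier G)" using h by (simp add: iso_def bij_betw_def)
  have "h (a \<otimes> inv b) = h (a' \<otimes> inv b)"
    using e a a' b iso_car[OF h] by (simp add: galex_op_def)
  hence "a \<otimes> inv b = a' \<otimes> inv b" using inj a a' b by (simp add: inj_on_def)
  thus "a = a'" using a a' b by simp
qed

lemma galex_rdiv: "h \<in> iso G G \<Longrightarrow> b \<in> carrier G \<Longrightarrow> c \<in> carrier G \<Longrightarrow>
   rdiv (carrier G) (galex_op G h) c b = galex_op G (inv_into (carrier G) h) c b"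
  unfolding rdiv_def
proof (rule the_equality)
  assume h: "h \<in> iso G G" and b: "b \<in> carrier G" and c: "c \<in> carrier G"
  have hi: "inv_into (carrier G) h \<in> iso G G" using iso_set_sym[OF h] by simp
  show "galex_op G (inv_into (carrier G) h) c b \<in> carrier G \<and>
      galex_op G h (galex_op G (inv_into (carrier G) h) c b) b = c"
    using galex_car[OF hi c b] galex_inv[OF h b c] by simp
  fix a assume "a \<in> carrier G \<and> galex_op G h a b = c"
  then show "a = galex_op G (inv_into (carrier G) h) c b"
    using galex_uniq[OF h _ galex_car[OF hi c b] b] galex_inv[OF h b c] by simp
qed

lemma galex_quandle: "h \<in> iso G G \<Longrightarrow> quandle (carrier G) (galex_op G h)"
  unfolding quandle_def
proof (intro conjI ballI)
  assume h: "h \<in> iso G G"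
  show "galex_op G h a b \<in> carrier G" if "a \<in> carrier G" "b \<in> carrier G" for a b
    using that h galex_car by blast
  show "galex_op G h a a = a" if "a \<in> carrier G" for a
    using that h by (simp add: galex_op_def iso_one)
  show "\<exists>!a. a \<in> carrier G \<and> galex_op G h a b = c" if "b \<in> carrier G" "c \<in> carrier G" for b c
  proof -
    have hi: "inv_into (carrier G) h \<in> iso G G" using iso_set_sym[OF h] by simp
    show ?thesis
    proof (rule ex1I[of _ "galex_op G (inv_into (carrier G) h) c b"])
      show "galex_op G (inv_into (carrier G) h) c b \<in> carrier G \<and>
        galex_op G h (galex_op G (inv_into (carrier G) h) c b) b = c"
        using galex_car[OF hi] galex_inv[OF h] that by simp
      fix a assume "a \<in> carrier G \<and> galex_op G h a b = c"
      then show "a = galex_op G (inv_into (carrier G) h) c b"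
        using galex_uniq[OF h _ galex_car[OF hi] ] galex_inv[OF h] that by simp
    qed
  qed
  show "galex_op G h (galex_op G h x y) z = galex_op G h (galex_op G h x z) (galex_op G h y z)"
    if x: "x \<in> carrier G" and y: "y \<in> carrier G" and z: "z \<in> carrier G" for x y z
  proof -
    have c: "\<And>u. u \<in> carrier G \<Longrightarrow> h u \<in> carrier G" using iso_car[OF h] .
    have "galex_op G h (galex_op G h x z) (galex_op G h y z)
        = h (h (x \<otimes> inv z) \<otimes> z \<otimes> inv (h (y \<otimes> inv z) \<otimes> z)) \<otimes> (h (y \<otimes> inv z) \<otimes> z)"
      by (simp add: galex_op_def)
    also have "h (x \<otimes> inv z) \<otimes> z \<otimes> inv (h (y \<otimes> inv z) \<otimes> z) = h (x \<otimes> inv z) \<otimes> h (z \<otimes> inv y)"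
      using x y z c by (simp add: inv_mult_group m_assoc iso_inv[OF h] iso_mult[OF h] zinvz)
    also have "\<dots> = h (x \<otimes> inv y)"
      using x y z by (simp add: iso_mult[OF h, symmetric] m_assoc invzz)
    finally have "galex_op G h (galex_op G h x z) (galex_op G h y z)
        = h (h (x \<otimes> inv y)) \<otimes> h (y \<otimes> inv z) \<otimes> z"
      using x y z c by (simp add: m_assoc)
    also have "\<dots> = galex_op G h (galex_op G h x y) z"
      using x y z c by (simp add: galex_op_def iso_mult[OF h] m_assoc)
    finally show ?thesis by simp
  qed
qed

lemma iter_pos: "h \<in> iso G G \<Longrightarrow> a \<in> carrier G \<Longrightarrow> b \<in> carrier G \<Longrightarrow>
   ((\<lambda>x. galex_op G h x b) ^^ n) a = galex_op G (h ^^ n) a b"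
proof (induction n)
  case 0
  then show ?case by (simp add: galex_op_def m_assoc)
next
  case (Suc n)
  then show ?case using galex_comp[OF Suc(2) iso_pow[OF Suc(2)]] by (simp add: comp_def)
qed

lemma iter_neg: "h \<in> iso G G \<Longrightarrow> a \<in> carrier G \<Longrightarrow> b \<in> carrier G \<Longrightarrow>
   ((\<lambda>x. rdiv (carrier G) (galex_op G h) x b) ^^ n) a
     = galex_op G (inv_into (carrier G) h ^^ n) a b"
proof (induction n)
  case 0
  then show ?case by (simp add: galex_op_def m_assoc)
next
  case (Suc n)
  have hi: "inv_into (carrier G) h \<in> iso G G" using iso_set_sym[OF Suc(2)] by simp
  have c: "galex_op G (inv_into (carrier G) h ^^ n) a b \<in> carrier G"
    using galex_car[OF iso_pow[OF hi]] Suc by blast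
  have "((\<lambda>x. rdiv (carrier G) (galex_op G h) x b) ^^ Suc n) a
      = rdiv (carrier G) (galex_op G h) (galex_op G (inv_into (carrier G) h ^^ n) a b) b"
    using Suc by simp
  also have "\<dots> = galex_op G (inv_into (carrier G) h) (galex_op G (inv_into (carrier G) h ^^ n) a b) b"
    using galex_rdiv[OF Suc(2) Suc(4) c] .
  also have "\<dots> = galex_op G (inv_into (carrier G) h \<circ> (inv_into (carrier G) h ^^ n)) a b"
    using galex_comp[OF hi iso_pow[OF hi] Suc(3) Suc(4)] .
  finally show ?case by (simp only: funpow.simps)
qed

lemma opow_galex: "h \<in> iso G G \<Longrightarrow> \<exists>g \<in> iso G G. \<forall>a\<in>carrier G. \<forall>b\<in>carrier G.
    opow (carrier G) (galex_op G h) n a b = galex_op G g a b"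
proof -
  assume h: "h \<in> iso G G"
  have hi: "inv_into (carrier G) h \<in> iso G G" using iso_set_sym[OF h] by simp
  show ?thesis
  proof (cases "0 \<le> n")
    case True
    show ?thesis
    proof (rule bexI[OF _ iso_pow[OF h, of "nat n"]], intro ballI)
      fix a b assume a: "a \<in> carrier G" and b: "b \<in> carrier G"
      show "opow (carrier G) (galex_op G h) n a b = galex_op G (h ^^ nat n) a b"
        unfolding opow_def using True iter_pos[OF h a b] by simp
    qed
  next
    case False
    show ?thesis
    proof (rule bexI[OF _ iso_pow[OF hi, of "nat (- n)"]], intro ballI)
      fix a b assume a: "a \<in> carrier G" and b: "b \<in> carrier G"
      show "opow (carrier G) (galex_op G h) n a b = galex_op G (inv_into (carrier G) h ^^ nat (- n)) a b"
        unfolding opow_def using False iter_neg[OF h a b] by simp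
    qed
  qed
qed

end

lemma quandle_cong: "quandle S f \<Longrightarrow> (\<And>a b. a \<in> S \<Longrightarrow> b \<in> S \<Longrightarrow> g a b = f a b) \<Longrightarrow> quandle S g"
proof -
  assume q: "quandle S f" and e: "\<And>a b. a \<in> S \<Longrightarrow> b \<in> S \<Longrightarrow> g a b = f a b"
  have u: "(\<exists>!a. a \<in> S \<and> g a b = c) = (\<exists>!a. a \<in> S \<and> f a b = c)" if "b \<in> S" for b c
  proof -
    have "(a \<in> S \<and> g a b = c) = (a \<in> S \<and> f a b = c)" for a using e that by auto
    then show ?thesis by simp
  qed
  have q1: "\<forall>a\<in>S. \<forall>b\<in>S. f a b \<in> S" and q2: "\<forall>a\<in>S. f a a = a"
    and q3: "\<forall>b\<in>S. \<forall>c\<in>S. \<exists>!a. a \<in> S \<and> f a b = c"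
    and q4: "\<forall>x\<in>S. \<forall>y\<in>S. \<forall>z\<in>S. f (f x y) z = f (f x z) (f y z)"
    using q unfolding quandle_def by blast+
  show ?thesis unfolding quandle_def
  proof (intro conjI ballI)
    fix a b assume "a \<in> S" "b \<in> S" then show "g a b \<in> S" using q1 e by simp
  next
    fix a assume "a \<in> S" then show "g a a = a" using q2 e by simp
  next
    fix b c assume "b \<in> S" "c \<in> S" then show "\<exists>!a. a \<in> S \<and> g a b = c" using q3 u by simp
  next
    fix x y z assume x: "x \<in> S" and y: "y \<in> S" and z: "z \<in> S"
    have "g (g x y) z = f (f x y) z" using x y z q1 e by simp
    also have "\<dots> = f (f x z) (f y z)" using x y z q4 by blast
    also have "\<dots> = g (g x z) (g y z)" using x y z q1 e by simp
    finally show "g (g x y) z = g (g x z) (g y z)" .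
  qed
qed

lemma auto_iso: "h \<in> auto G \<Longrightarrow> h \<in> iso G G"
  by (auto simp: auto_def iso_def Bij_def)

theorem proposition4p19:
  fixes G :: "('g, 'm) monoid_scheme" and \<phi> \<psi> :: "'g \<Rightarrow> 'g" and k l :: int
  assumes "group G"
    and "\<phi> \<in> auto G" and "\<psi> \<in> auto G"
    and "\<forall>x\<in>carrier G. \<phi> (\<psi> x) = \<psi> (\<phi> x)"
  shows "quandle (carrier G)
           (\<lambda>a b. opow (carrier G) (galex_op G \<psi>) l
                     (opow (carrier G) (galex_op G \<phi>) k a b) b)"
proof -
  interpret group G by fact
  obtain g1 where g1: "g1 \<in> iso G G" "\<forall>a\<in>carrier G. \<forall>b\<in>carrier G.
    opow (carrier G) (galex_op G \<phi>) k a b = galex_op G g1 a b"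
    using opow_galex[OF auto_iso[OF assms(2)]] by blast
  obtain g2 where g2: "g2 \<in> iso G G" "\<forall>a\<in>carrier G. \<forall>b\<in>carrier G.
    opow (carrier G) (galex_op G \<psi>) l a b = galex_op G g2 a b"
    using opow_galex[OF auto_iso[OF assms(3)]] by blast
  show ?thesis
  proof (rule quandle_cong[OF galex_quandle[OF iso_set_trans[OF g1(1) g2(1)]]])
    fix a b assume a: "a \<in> carrier G" and b: "b \<in> carrier G"
    show "opow (carrier G) (galex_op G \<psi>) l (opow (carrier G) (galex_op G \<phi>) k a b) b
        = galex_op G (g2 \<circ> g1) a b"
    proof -
      have e1: "opow (carrier G) (galex_op G \<phi>) k a b = galex_op G g1 a b" using g1(2) a b by blast
      have c1: "galex_op G g1 a b \<in> carrier G" using galex_car[OF g1(1) a b] .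
      have e2: "opow (carrier G) (galex_op G \<psi>) l (galex_op G g1 a b) b = galex_op G g2 (galex_op G g1 a b) b"
        using g2(2) c1 b by blast
      show ?thesis unfolding e1 e2 using galex_comp[OF g2(1) g1(1) a b] .
    qed
  qed
qed

end
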